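(* Let $p,q,r$ be pairwise distinct primes with $p<q$ and $p<r$. Let $q',r'\in\{1,\dots,p-1\}$ be the inverses of $q,r$ modulo $p$, and let $M=\max\{q',r'\}$, $m=\min\{q',r'\}$. Then for every integer $k$, $$F_k-F_{k-q}-F_{k-r}+F_{k-q-r}=\begin{cases}0,& a_k<M+m-p,\\ -1,& M+m-p\le a_k<m,\\ 0,& m\le a_k<M,\\ 1,& M\le a_k<M+m,\\ 0,& M+m\le a_k.\end{cases}$$ More generally, let $(t,u,v)$ be any permutation of $(p,q,r)$, let $x_k$ denote $a_k$, $b_k$ or $c_k$ according as $t=p$, $t=q$ or $t=r$, let $u',v'\in\{1,\dots,t-1\}$ be the inverses of $u,v$ modulo $t$, and $M=\max\{u',v'\}$, $m=\min\{u',v'\}$. Then the same formula holds for $F_k-F_{k-u}-F_{k-v}+F_{k-u-v}$ with $a_k$ replaced by $x_k$ and $p$ replaced by $t$.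
   Context: For each integer $k$, let $a_k,b_k,c_k$ be the unique integers with $0\le a_k<p$, $0\le b_k<q$, $0\le c_k<r$ and $k\equiv a_kqr+b_krp+c_kpq \pmod{pqr}$, and define $F_k=\frac{a_k}{p}+\frac{b_k}{q}+\frac{c_k}{r}-\frac{k}{pqr}$. *)

theory Defs
  imports "HOL-Number_Theory.Number_Theory"
begin

definition abc :: "int \<Rightarrow> int \<Rightarrow> int \<Rightarrow> int \<Rightarrow> int \<times> int \<times> int" where
  "abc p q r k = (THE x. case x of (a, b, c) \<Rightarrow>
      0 \<le> a \<and> a < p \<and> 0 \<le> b \<and> b < q \<and> 0 \<le> c \<and> c < r \<and>
      [k = a * q * r + b * r * p + c * p * q] (mod p * q * r))"

definition acoord :: "int \<Rightarrow> int \<Rightarrow> int \<Rightarrow> int \<Rightarrow> int" where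
  "acoord p q r k = fst (abc p q r k)"

definition bcoord :: "int \<Rightarrow> int \<Rightarrow> int \<Rightarrow> int \<Rightarrow> int" where
  "bcoord p q r k = fst (snd (abc p q r k))"

definition ccoord :: "int \<Rightarrow> int \<Rightarrow> int \<Rightarrow> int \<Rightarrow> int" where
  "ccoord p q r k = snd (snd (abc p q r k))"

definition Fk :: "int \<Rightarrow> int \<Rightarrow> int \<Rightarrow> int \<Rightarrow> real" where
  "Fk p q r k = real_of_int (acoord p q r k) / real_of_int p
              + real_of_int (bcoord p q r k) / real_of_int q
              + real_of_int (ccoord p q r k) / real_of_int r
              - real_of_int k / real_of_int (p * q * r)"

end

theory Submission
  imports Defs
begin


lemma coord_unique:
  fixes s P y y' j :: int
  assumes "coprime P s" "0 \<le> y" "y < s" "0 \<le> y'" "y' < s"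
    "[y * P = j] (mod s)" "[y' * P = j] (mod s)"
  shows "y = y'"
proof -
  have "[y * P = y' * P] (mod s)" using assms(6,7) by (meson cong_sym cong_trans)
  hence "s dvd (y - y') * P" by (simp add: cong_iff_dvd_diff left_diff_distrib)
  hence "s dvd (y - y')" using assms(1) by (simp add: coprime_commute coprime_dvd_mult_left_iff)
  hence "[y = y'] (mod s)" by (simp add: cong_iff_dvd_diff)
  thus ?thesis using assms by (simp add: cong_def)
qed

lemma abc_char:
  fixes p q r k :: int
  assumes "prime p" "prime q" "prime r" "p \<noteq> q" "q \<noteq> r" "p \<noteq> r"
  shows "0 \<le> acoord p q r k \<and> acoord p q r k < p \<and> [acoord p q r k * (q * r) = k] (mod p)"
    "0 \<le> bcoord p q r k \<and> bcoord p q r k < q \<and> [bcoord p q r k * (r * p) = k] (mod q)"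
    "0 \<le> ccoord p q r k \<and> ccoord p q r k < r \<and> [ccoord p q r k * (p * q) = k] (mod r)"
proof -
  have cpq: "coprime p q" "coprime q r" "coprime p r"
    using assms primes_coprime by auto
  have pos: "p > 0" "q > 0" "r > 0" using assms prime_gt_0_int by auto
  define Pr where "Pr = (\<lambda>(a,b,c). 0 \<le> a \<and> a < p \<and> 0 \<le> b \<and> b < q \<and> 0 \<le> c \<and> c < r \<and>
      [k = a * q * r + b * r * p + c * p * q] (mod p * q * r))"
  have c1: "coprime (q*r) p" using cpq by (simp add: coprime_commute)
  have c2: "coprime (r*p) q" using cpq by (simp add: coprime_commute)
  have c3: "coprime (p*q) r" using cpq by (simp add: coprime_commute)
  obtain i1 where i1: "[(q*r) * i1 = 1] (mod p)" using cong_solve_coprime_int[OF c1] by blast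
  obtain i2 where i2: "[(r*p) * i2 = 1] (mod q)" using cong_solve_coprime_int[OF c2] by blast
  obtain i3 where i3: "[(p*q) * i3 = 1] (mod r)" using cong_solve_coprime_int[OF c3] by blast
  define a where "a = (k * i1) mod p"
  define b where "b = (k * i2) mod q"
  define c where "c = (k * i3) mod r"
  have ha: "[a * (q*r) = k] (mod p)"
  proof -
    have "[a * (q*r) = (k*i1) * (q*r)] (mod p)" unfolding a_def by (simp add: cong_def mod_mult_left_eq)
    moreover have "[(k*i1) * (q*r) = k * ((q*r)*i1)] (mod p)" by (simp add: ac_simps)
    moreover have "[k * ((q*r)*i1) = k * 1] (mod p)" using i1 cong_scalar_left by blast
    ultimately show ?thesis by (metis cong_trans mult_1_right)
  qed
  have hb: "[b * (r*p) = k] (mod q)"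
  proof -
    have "[b * (r*p) = (k*i2) * (r*p)] (mod q)" unfolding b_def by (simp add: cong_def mod_mult_left_eq)
    moreover have "[(k*i2) * (r*p) = k * ((r*p)*i2)] (mod q)" by (simp add: ac_simps)
    moreover have "[k * ((r*p)*i2) = k * 1] (mod q)" using i2 cong_scalar_left by blast
    ultimately show ?thesis by (metis cong_trans mult_1_right)
  qed
  have hc: "[c * (p*q) = k] (mod r)"
  proof -
    have "[c * (p*q) = (k*i3) * (p*q)] (mod r)" unfolding c_def by (simp add: cong_def mod_mult_left_eq)
    moreover have "[(k*i3) * (p*q) = k * ((p*q)*i3)] (mod r)" by (simp add: ac_simps)
    moreover have "[k * ((p*q)*i3) = k * 1] (mod r)" using i3 cong_scalar_left by blast
    ultimately show ?thesis by (metis cong_trans mult_1_right)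
  qed
  define D where "D = a * q * r + b * r * p + c * p * q - k"
  have "D = (a*(q*r) - k) + p*(b*r + c*q)" unfolding D_def by (simp add: algebra_simps)
  hence "p dvd D" using ha unfolding cong_iff_dvd_diff by simp
  moreover have "D = (b*(r*p) - k) + q*(a*r + c*p)" unfolding D_def by (simp add: algebra_simps)
  hence "q dvd D" using hb unfolding cong_iff_dvd_diff by simp
  moreover have "D = (c*(p*q) - k) + r*(a*q + b*p)" unfolding D_def by (simp add: algebra_simps)
  hence "r dvd D" using hc unfolding cong_iff_dvd_diff by simp
  ultimately have "p * q * r dvd D" using cpq
    by (metis coprime_mult_left_iff divides_mult)
  hence Pabc: "Pr (a,b,c)" unfolding Pr_def D_def using pos
    by (auto simp: a_def b_def c_def cong_iff_dvd_diff dvd_diff_commute)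
  have uniq: "x = (a,b,c)" if "Pr x" for x
  proof -
    obtain a' b' c' where x: "x = (a',b',c')" by (cases x) auto
    have h: "0 \<le> a' \<and> a' < p \<and> 0 \<le> b' \<and> b' < q \<and> 0 \<le> c' \<and> c' < r \<and>
      [k = a' * q * r + b' * r * p + c' * p * q] (mod p * q * r)" using that x Pr_def by simp
    have hp: "[k = a' * q * r + b' * r * p + c' * p * q] (mod p)" using h cong_dvd_modulus by (metis dvd_triv_left mult.assoc)
    have hq: "[k = a' * q * r + b' * r * p + c' * p * q] (mod q)" using h cong_dvd_modulus by (metis dvd_triv_left dvd_triv_right dvd_mult2 mult.assoc)
    have hr: "[k = a' * q * r + b' * r * p + c' * p * q] (mod r)" using h cong_dvd_modulus by (metis dvd_triv_right)
    have eq: "a' * (q*r) - k = -(k - (a' * q * r + b' * r * p + c' * p * q)) - p*(b'*r + c'*q)" by (simp add: algebra_simps)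
    have "[a' * (q*r) = k] (mod p)" using hp unfolding cong_iff_dvd_diff eq by (intro dvd_diff; simp add: dvd_diff_commute)
    then have "a' = a" using coord_unique[OF c1] h ha pos a_def by auto
    have eq: "b' * (r*p) - k = -(k - (a' * q * r + b' * r * p + c' * p * q)) - q*(a'*r + c'*p)" by (simp add: algebra_simps)
    have "[b' * (r*p) = k] (mod q)" using hq unfolding cong_iff_dvd_diff eq by (intro dvd_diff; simp add: dvd_diff_commute)
    hence "b' = b" using coord_unique[OF c2] h hb pos b_def by auto
    have eq: "c' * (p*q) - k = -(k - (a' * q * r + b' * r * p + c' * p * q)) - r*(a'*q + b'*p)" by (simp add: algebra_simps)
    have "[c' * (p*q) = k] (mod r)" using hr unfolding cong_iff_dvd_diff eq by (intro dvd_diff; simp add: dvd_diff_commute)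
    hence "c' = c" using coord_unique[OF c3] h hc pos c_def by auto
    show ?thesis using x \<open>a' = a\<close> \<open>b' = b\<close> \<open>c' = c\<close> by simp
  qed
  have "abc p q r k = (a,b,c)"
    unfolding abc_def
    apply (rule the_equality)
    using Pabc uniq unfolding Pr_def by auto
  thus "0 \<le> acoord p q r k \<and> acoord p q r k < p \<and> [acoord p q r k * (q * r) = k] (mod p)"
    "0 \<le> bcoord p q r k \<and> bcoord p q r k < q \<and> [bcoord p q r k * (r * p) = k] (mod q)"
    "0 \<le> ccoord p q r k \<and> ccoord p q r k < r \<and> [ccoord p q r k * (p * q) = k] (mod r)"
    using ha hb hc pos by (auto simp: acoord_def bcoord_def ccoord_def a_def b_def c_def)
qed



lemma mod_shift:
  fixes y c t :: int
  assumes "0 \<le> y + c*t" "y + c*t < t"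
  shows "y mod t = y + c*t"
proof -
  have h: "(y + c*t) mod t = y mod t" by (rule mod_mult_self1)
  have "(y + c*t) mod t = y + c*t" using assms by (intro mod_pos_pos_trivial)
  with h show ?thesis by simp
qed

lemma comb_int:
  fixes t x u' v' :: int
  assumes "0 \<le> x" "x < t" "1 \<le> u'" "u' \<le> t - 1" "1 \<le> v'" "v' \<le> t - 1"
  shows "x - (x - v') mod t - (x - u') mod t + (x - u' - v') mod t =
     t * (let M = max u' v'; m = min u' v' in
            (if x < M + m - t then 0
             else if M + m - t \<le> x \<and> x < m then -1
             else if m \<le> x \<and> x < M then 0
             else if M \<le> x \<and> x < M + m then 1
             else 0))"
proof -
  have e1: "(x - v') mod t = x - v' + (if x < v' then 1 else 0) * t"
    by (rule mod_shift) (use assms in auto)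
  have e2: "(x - u') mod t = x - u' + (if x < u' then 1 else 0) * t"
    by (rule mod_shift) (use assms in auto)
  have e3: "(x - u' - v') mod t = x - u' - v' + (if x < u' + v' - t then 2 else if x < u' + v' then 1 else 0) * t"
    by (rule mod_shift) (use assms in auto)
  show ?thesis unfolding e1 e2 e3 Let_def using assms
    by (auto simp: max_def min_def algebra_simps)
qed



lemma generic:
  fixes t u v u' v' k :: int and X Y Z :: "int \<Rightarrow> int"
  assumes pos: "0 < t" "0 < u" "0 < v"
    and cop: "coprime (u*v) t" "coprime (v*t) u" "coprime (t*u) v"
    and u': "1 \<le> u'" "u' \<le> t - 1" "[u * u' = 1] (mod t)"
    and v': "1 \<le> v'" "v' \<le> t - 1" "[v * v' = 1] (mod t)"
    and hX: "\<And>j. 0 \<le> X j \<and> X j < t \<and> [X j * (u*v) = j] (mod t)"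
    and hY: "\<And>j. 0 \<le> Y j \<and> Y j < u \<and> [Y j * (v*t) = j] (mod u)"
    and hZ: "\<And>j. 0 \<le> Z j \<and> Z j < v \<and> [Z j * (t*u) = j] (mod v)"
    and G: "\<And>j. G j = real_of_int (X j) / real_of_int t + real_of_int (Y j) / real_of_int u
              + real_of_int (Z j) / real_of_int v - real_of_int j / real_of_int (t*u*v)"
  shows "G k - G (k - u) - G (k - v) + G (k - u - v) =
     (let M = max u' v'; m = min u' v'; x = X k in
            (if x < M + m - t then 0
             else if M + m - t \<le> x \<and> x < m then -1
             else if m \<le> x \<and> x < M then 0
             else if M \<le> x \<and> x < M + m then 1
             else 0))"
proof -
  have Ysh: "Y (j - u) = Y j" for j
  proof -
    have "[Y j * (v*t) = j - u] (mod u)"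
    proof -
      have eq: "Y j * (v*t) - (j - u) = (Y j * (v*t) - j) + u" by simp
      show ?thesis using hY[of j] unfolding cong_iff_dvd_diff eq by simp
    qed
    thus ?thesis using coord_unique[OF cop(2)] hY[of j] hY[of "j-u"] by blast
  qed
  have Zsh: "Z (j - v) = Z j" for j
  proof -
    have "[Z j * (t*u) = j - v] (mod v)"
    proof -
      have eq: "Z j * (t*u) - (j - v) = (Z j * (t*u) - j) + v" by simp
      show ?thesis using hZ[of j] unfolding cong_iff_dvd_diff eq by simp
    qed
    thus ?thesis using coord_unique[OF cop(3)] hZ[of j] hZ[of "j-v"] by blast
  qed
  have Xsh: "X (j - w'') = (X j - w') mod t" if w: "[w * w' = 1] (mod t)"
     and ww: "w'' * w = u * v" for j w w' w''
  proof -
    have "[((X j - w') mod t) * (u*v) = j - w''] (mod t)"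
    proof -
      have eq: "((X j - w') mod t) * (u*v) - (j - w'') =
         ((X j - w') mod t - (X j - w')) * (u*v) + (X j * (u*v) - j) - w'' * (w * w' - 1)"
        using ww by (simp add: algebra_simps)
      have d1: "t dvd ((X j - w') mod t - (X j - w'))"
        by (metis cong_iff_dvd_diff cong_mod_left cong_refl)
      have d2: "t dvd (X j * (u*v) - j)" using hX[of j] by (simp add: cong_iff_dvd_diff)
      have d3: "t dvd (w * w' - 1)" using w by (simp add: cong_iff_dvd_diff)
      show ?thesis unfolding cong_iff_dvd_diff eq
        by (rule dvd_diff[OF dvd_add[OF dvd_mult2[OF d1] d2] dvd_mult[OF d3]])
    qed
    moreover have "0 \<le> (X j - w') mod t" "(X j - w') mod t < t" using pos by auto
    ultimately show ?thesis using coord_unique[OF cop(1)] hX[of "j-w''"] by blast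
  qed
  have X1: "X (j - u) = (X j - v') mod t" for j using Xsh[OF v'(3), of u] by simp
  have X2: "X (j - v) = (X j - u') mod t" for j using Xsh[OF u'(3), of v] by (simp add: mult.commute)
  have X3: "X (k - u - v) = (X k - u' - v') mod t"
    using X1[of k] X2[of "k-u"] by (simp add: mod_diff_left_eq algebra_simps)
  have Y3: "Y (k - u - v) = Y (k - v)" using Ysh[of "k-v"] by (simp add: algebra_simps)
  have Z3: "Z (k - u - v) = Z (k - u)" using Zsh[of "k-u"] by (simp add: algebra_simps)
  have ci: "X k - X (k - u) - X (k - v) + X (k - u - v) =
     t * (let M = max u' v'; m = min u' v' in
            (if X k < M + m - t then 0
             else if M + m - t \<le> X k \<and> X k < m then -1
             else if m \<le> X k \<and> X k < M then 0
             else if M \<le> X k \<and> X k < M + m then 1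
             else 0))"
    unfolding X3 unfolding X1 X2 using comb_int[of "X k" t u' v'] hX[of k] u' v' by simp
  have "G k - G (k - u) - G (k - v) + G (k - u - v) =
     real_of_int (X k - X (k - u) - X (k - v) + X (k - u - v)) / real_of_int t"
    unfolding G Y3 Z3 Ysh Zsh using pos by (simp add: field_simps)
  also have "\<dots> = real_of_int (let M = max u' v'; m = min u' v' in
            (if X k < M + m - t then 0
             else if M + m - t \<le> X k \<and> X k < m then -1
             else if m \<le> X k \<and> X k < M then 0
             else if M \<le> X k \<and> X k < M + m then 1
             else 0))" unfolding ci using pos by simp
  also have "\<dots> = (let M = max u' v'; m = min u' v'; x = X k in
            (if x < M + m - t then 0
             else if M + m - t \<le> x \<and> x < m then -1
             else if m \<le> x \<and> x < M then 0
             else if M \<le> x \<and> x < M + m then 1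
             else 0))" by (simp add: Let_def)
  finally show ?thesis .
qed



theorem lemma3:
  fixes p q r t u v u' v' k :: int
  assumes "prime p" and "prime q" and "prime r"
    and "p \<noteq> q" and "q \<noteq> r" and "p \<noteq> r"
    and "p < q" and "p < r"
    and "(t, u, v) \<in> {(p, q, r), (p, r, q), (q, p, r), (q, r, p), (r, p, q), (r, q, p)}"
    and "1 \<le> u'" and "u' \<le> t - 1" and "[u * u' = 1] (mod t)"
    and "1 \<le> v'" and "v' \<le> t - 1" and "[v * v' = 1] (mod t)"
  shows "let M = max u' v'; m = min u' v';
             x = (if t = p then acoord p q r k
                  else if t = q then bcoord p q r k
                  else ccoord p q r k)
         in Fk p q r k - Fk p q r (k - u) - Fk p q r (k - v) + Fk p q r (k - u - v) =
            (if x < M + m - t then 0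
             else if M + m - t \<le> x \<and> x < m then -1
             else if m \<le> x \<and> x < M then 0
             else if M \<le> x \<and> x < M + m then 1
             else 0)"
proof -
  note ch = abc_char[OF assms(1-6)]
  have cp: "coprime p q" "coprime q r" "coprime p r" "coprime q p" "coprime r q" "coprime r p"
    using assms(1-6) primes_coprime by auto
  have pos: "0 < p" "0 < q" "0 < r" using assms(1-3) prime_gt_0_int by auto
  note uv = assms(10-15)
  have A: "\<And>j. 0 \<le> acoord p q r j \<and> acoord p q r j < p \<and> [acoord p q r j * (q*r) = j] (mod p)"
    "\<And>j. 0 \<le> acoord p q r j \<and> acoord p q r j < p \<and> [acoord p q r j * (r*q) = j] (mod p)"
    using ch(1) by (auto simp: mult.commute)
  have B: "\<And>j. 0 \<le> bcoord p q r j \<and> bcoord p q r j < q \<and> [bcoord p q r j * (r*p) = j] (mod q)"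
    "\<And>j. 0 \<le> bcoord p q r j \<and> bcoord p q r j < q \<and> [bcoord p q r j * (p*r) = j] (mod q)"
    using ch(2) by (auto simp: mult.commute)
  have C: "\<And>j. 0 \<le> ccoord p q r j \<and> ccoord p q r j < r \<and> [ccoord p q r j * (p*q) = j] (mod r)"
    "\<And>j. 0 \<le> ccoord p q r j \<and> ccoord p q r j < r \<and> [ccoord p q r j * (q*p) = j] (mod r)"
    using ch(3) by (auto simp: mult.commute)
  have F: "\<And>j. Fk p q r j = real_of_int (acoord p q r j) / real_of_int p
              + real_of_int (bcoord p q r j) / real_of_int q
              + real_of_int (ccoord p q r j) / real_of_int r - real_of_int j / real_of_int (p*q*r)"
    "\<And>j. Fk p q r j = real_of_int (acoord p q r j) / real_of_int p
              + real_of_int (ccoord p q r j) / real_of_int r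
              + real_of_int (bcoord p q r j) / real_of_int q - real_of_int j / real_of_int (p*r*q)"
    "\<And>j. Fk p q r j = real_of_int (bcoord p q r j) / real_of_int q
              + real_of_int (acoord p q r j) / real_of_int p
              + real_of_int (ccoord p q r j) / real_of_int r - real_of_int j / real_of_int (q*p*r)"
    "\<And>j. Fk p q r j = real_of_int (bcoord p q r j) / real_of_int q
              + real_of_int (ccoord p q r j) / real_of_int r
              + real_of_int (acoord p q r j) / real_of_int p - real_of_int j / real_of_int (q*r*p)"
    "\<And>j. Fk p q r j = real_of_int (ccoord p q r j) / real_of_int r
              + real_of_int (acoord p q r j) / real_of_int p
              + real_of_int (bcoord p q r j) / real_of_int q - real_of_int j / real_of_int (r*p*q)"
    "\<And>j. Fk p q r j = real_of_int (ccoord p q r j) / real_of_int r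
              + real_of_int (bcoord p q r j) / real_of_int q
              + real_of_int (acoord p q r j) / real_of_int p - real_of_int j / real_of_int (r*q*p)"
    unfolding Fk_def by (simp_all add: ac_simps)
  have neq: "p \<noteq> q" "q \<noteq> r" "p \<noteq> r" "q \<noteq> p" "r \<noteq> q" "r \<noteq> p" using assms(4-6) by auto
  from assms(9) show ?thesis
  proof (elim insertE emptyE)
    assume h: "(t, u, v) = (p, q, r)"
    hence e: "t = p" "u = q" "v = r" by auto
    show ?thesis using generic[OF _ _ _ _ _ _ _ _ _ _ _ _ _ _ _ F(1)] e A B C pos cp uv neq
      by (simp add: coprime_commute Let_def)
  next
    assume h: "(t, u, v) = (p, r, q)"
    hence e: "t = p" "u = r" "v = q" by auto
    show ?thesis using generic[OF _ _ _ _ _ _ _ _ _ _ _ _ _ _ _ F(2)] e A B C pos cp uv neq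
      by (simp add: coprime_commute Let_def)
  next
    assume h: "(t, u, v) = (q, p, r)"
    hence e: "t = q" "u = p" "v = r" by auto
    show ?thesis using generic[OF _ _ _ _ _ _ _ _ _ _ _ _ _ _ _ F(3)] e A B C pos cp uv neq
      by (simp add: coprime_commute Let_def)
  next
    assume h: "(t, u, v) = (q, r, p)"
    hence e: "t = q" "u = r" "v = p" by auto
    show ?thesis using generic[OF _ _ _ _ _ _ _ _ _ _ _ _ _ _ _ F(4)] e A B C pos cp uv neq
      by (simp add: coprime_commute Let_def)
  next
    assume h: "(t, u, v) = (r, p, q)"
    hence e: "t = r" "u = p" "v = q" by auto
    show ?thesis using generic[OF _ _ _ _ _ _ _ _ _ _ _ _ _ _ _ F(5)] e A B C pos cp uv neq
      by (simp add: coprime_commute Let_def)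
  next
    assume h: "(t, u, v) = (r, q, p)"
    hence e: "t = r" "u = q" "v = p" by auto
    show ?thesis using generic[OF _ _ _ _ _ _ _ _ _ _ _ _ _ _ _ F(6)] e A B C pos cp uv neq
      by (simp add: coprime_commute Let_def)
  qed
qed

end
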